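(* Let $R$ be a commutative Noetherian ring of prime characteristic $p$, and let $G$ be an $x$-torsion-free left $R[x,f]$-module such that the set $\mathcal{I}(G)$ of $G$-special $R$-ideals is finite. Then there exists a uniquely determined ideal $\mathfrak{b}\in\mathcal{I}(G)$ with $\operatorname{height}\mathfrak{b}\ge1$ and $\mathfrak{b}\subset\mathfrak{c}$ for every other $\mathfrak{c}\in\mathcal{I}(G)$ with $\operatorname{height}\mathfrak{c}\ge1$. Moreover, for $g\in G$ the following are equivalent: (i) $g$ is annihilated by $\mathfrak{b}R[x,f]=\bigoplus_{n\ge0}\mathfrak{b}x^n$; (ii) there exists $c\in R^\circ\cap\mathfrak{b}$ with $cx^ng=0$ for all $n\gg0$; (iii) there exists $c\in R^\circ$ with $cx^ng=0$ for all $n\gg0$.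
   Context: $R[x,f]$ is the Frobenius skew polynomial ring: free left $R$-module on $(x^i)_{i\ge0}$, with $xr=r^px$. $G$ is $x$-torsion-free if $xg=0$ implies $g=0$. The graded annihilator $\operatorname{grann}N$ of an $R[x,f]$-submodule $N$ is the set of $\sum r_ix^i$ with each $r_ix^i$ annihilating $N$. An ideal $\mathfrak{b}$ of $R$ is $G$-special if $\operatorname{grann}N=\bigoplus_{n\ge0}\mathfrak{b}x^n$ for some $R[x,f]$-submodule $N$ of $G$; $\mathcal{I}(G)$ is the set of these. The improper ideal $R$ has infinite height. $R^\circ$ is the complement of the union of the minimal primes of $R$. *)

theory Defs
  imports Main "HOL-Library.Extended_Nat" "HOL-Computational_Algebra.Primes"
begin

definition is_ideal :: "'a::comm_ring_1 set \<Rightarrow> bool" where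
  "is_ideal I \<longleftrightarrow> 0 \<in> I \<and> (\<forall>a\<in>I. \<forall>b\<in>I. a + b \<in> I) \<and> (\<forall>r. \<forall>a\<in>I. r * a \<in> I)"

definition noetherian_ring :: "'a::comm_ring_1 itself \<Rightarrow> bool" where
  "noetherian_ring _ \<longleftrightarrow>
     (\<forall>f :: nat \<Rightarrow> 'a set. (\<forall>n. is_ideal (f n) \<and> f n \<subseteq> f (Suc n)) \<longrightarrow>
        (\<exists>N. \<forall>n\<ge>N. f n = f N))"

definition prime_ideal :: "'a::comm_ring_1 set \<Rightarrow> bool" where
  "prime_ideal P \<longleftrightarrow> is_ideal P \<and> P \<noteq> UNIV \<and> (\<forall>a b. a * b \<in> P \<longrightarrow> a \<in> P \<or> b \<in> P)"

definition prime_height :: "'a::comm_ring_1 set \<Rightarrow> enat" where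
  "prime_height P = Sup {enat n | n. \<exists>c :: nat \<Rightarrow> 'a set.
      (\<forall>i\<le>n. prime_ideal (c i)) \<and> (\<forall>i<n. c i \<subset> c (Suc i)) \<and> c n = P}"

text \<open>Height of an ideal: infimum of heights of primes containing it
  (the improper ideal gets Inf {} = \<infinity>).\<close>
definition ideal_height :: "'a::comm_ring_1 set \<Rightarrow> enat" where
  "ideal_height I = Inf {prime_height P | P. prime_ideal P \<and> I \<subseteq> P}"

definition minimal_prime :: "'a::comm_ring_1 set \<Rightarrow> bool" where
  "minimal_prime P \<longleftrightarrow> prime_ideal P \<and> (\<forall>Q. prime_ideal Q \<and> Q \<subseteq> P \<longrightarrow> Q = P)"

definition R_circ :: "'a::comm_ring_1 set" where
  "R_circ = - \<Union>{P. minimal_prime P}"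

text \<open>A left R[x,f]-module: an R-module G with an additive map X (action of x)
  satisfying x r = r^p x.\<close>
definition frob_module :: "nat \<Rightarrow> ('a::comm_ring_1 \<Rightarrow> 'g::ab_group_add \<Rightarrow> 'g) \<Rightarrow> ('g \<Rightarrow> 'g) \<Rightarrow> bool" where
  "frob_module p smult X \<longleftrightarrow> module smult \<and> (\<forall>g h. X (g + h) = X g + X h)
      \<and> (\<forall>r g. X (smult r g) = smult (r ^ p) (X g))"

definition x_torsion_free :: "('g::ab_group_add \<Rightarrow> 'g) \<Rightarrow> bool" where
  "x_torsion_free X \<longleftrightarrow> (\<forall>g. X g = 0 \<longrightarrow> g = 0)"

definition frob_submodule :: "('a::comm_ring_1 \<Rightarrow> 'g::ab_group_add \<Rightarrow> 'g) \<Rightarrow> ('g \<Rightarrow> 'g) \<Rightarrow> 'g set \<Rightarrow> bool" where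
  "frob_submodule smult X N \<longleftrightarrow> 0 \<in> N \<and> (\<forall>g\<in>N. \<forall>h\<in>N. g + h \<in> N)
      \<and> (\<forall>r. \<forall>g\<in>N. smult r g \<in> N) \<and> (\<forall>g\<in>N. X g \<in> N)"

text \<open>Elements of R[x,f] are represented by their coefficient sequences
  (finitely supported c :: nat \<Rightarrow> 'a, standing for \<Sum> c n x^n).\<close>
definition skew_poly :: "(nat \<Rightarrow> 'a::comm_ring_1) set" where
  "skew_poly = {c. finite {n. c n \<noteq> 0}}"

definition skew_act :: "('a::comm_ring_1 \<Rightarrow> 'g::ab_group_add \<Rightarrow> 'g) \<Rightarrow> ('g \<Rightarrow> 'g) \<Rightarrow> (nat \<Rightarrow> 'a) \<Rightarrow> 'g \<Rightarrow> 'g" where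
  "skew_act smult X c g = (\<Sum>n\<in>{n. c n \<noteq> 0}. smult (c n) ((X ^^ n) g))"

definition grann :: "('a::comm_ring_1 \<Rightarrow> 'g::ab_group_add \<Rightarrow> 'g) \<Rightarrow> ('g \<Rightarrow> 'g) \<Rightarrow> 'g set \<Rightarrow> (nat \<Rightarrow> 'a) set" where
  "grann smult X N = {c \<in> skew_poly. \<forall>n. \<forall>g\<in>N. smult (c n) ((X ^^ n) g) = 0}"

definition graded_ext :: "'a::comm_ring_1 set \<Rightarrow> (nat \<Rightarrow> 'a) set" where
  "graded_ext b = {c \<in> skew_poly. \<forall>n. c n \<in> b}"

definition special_ideals :: "('a::comm_ring_1 \<Rightarrow> 'g::ab_group_add \<Rightarrow> 'g) \<Rightarrow> ('g \<Rightarrow> 'g) \<Rightarrow> 'a set set" where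
  "special_ideals smult X = {b. \<exists>N. frob_submodule smult X N \<and> grann smult X N = graded_ext b}"

end

theory Submission
  imports Defs
begin


lemma ideal_zero: "is_ideal I \<Longrightarrow> 0 \<in> I" by (simp add: is_ideal_def)
lemma ideal_mult: "is_ideal I \<Longrightarrow> a \<in> I \<Longrightarrow> r * a \<in> I" by (simp add: is_ideal_def)
lemma ideal_mult2: "is_ideal I \<Longrightarrow> a \<in> I \<Longrightarrow> a * r \<in> I"
  by (metis ideal_mult mult.commute)
lemma ideal_add: "is_ideal I \<Longrightarrow> a \<in> I \<Longrightarrow> b \<in> I \<Longrightarrow> a + b \<in> I" by (simp add: is_ideal_def)

lemma ideal_diff: "is_ideal I \<Longrightarrow> a \<in> I \<Longrightarrow> b \<in> I \<Longrightarrow> a - b \<in> I"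
proof -
  assume "is_ideal I" "a \<in> I" "b \<in> I"
  then have "a + (-1) * b \<in> I" using ideal_add ideal_mult by blast
  then show ?thesis by simp
qed

lemma prime_mult: "prime_ideal P \<Longrightarrow> a * b \<in> P \<Longrightarrow> a \<in> P \<or> b \<in> P"
  unfolding prime_ideal_def by simp
lemma prime_is_ideal: "prime_ideal P \<Longrightarrow> is_ideal P"
  unfolding prime_ideal_def by simp

lemma prime_one: "prime_ideal P \<Longrightarrow> (1::'a::comm_ring_1) \<notin> P"
proof
  assume "prime_ideal P" "(1::'a) \<in> P"
  then have "\<forall>x. x \<in> P" using ideal_mult2[of P 1] unfolding prime_ideal_def by auto
  then show False using \<open>prime_ideal P\<close> unfolding prime_ideal_def by auto
qed

lemma prime_prod_notin:
  assumes "prime_ideal P" "finite A" "\<forall>x\<in>A. f x \<notin> P"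
  shows "prod f A \<notin> P"
  using assms(2,3)
proof (induction A rule: finite_induct)
  case empty then show ?case using prime_one[OF assms(1)] by simp
next
  case (insert x F) then show ?case using assms(1) unfolding prime_ideal_def by auto
qed

lemma ideal_prod_in:
  assumes "is_ideal I" "finite A" "x \<in> A" "f x \<in> I"
  shows "prod f A \<in> I"
proof -
  have "prod f A = f x * prod f (A - {x})" using assms by (simp add: prod.remove)
  then show ?thesis using ideal_mult2[OF assms(1) assms(4)] by simp
qed

lemma noeth_wf:
  assumes "noetherian_ring TYPE('a::comm_ring_1)"
  shows "wf {(J, I). is_ideal (I::'a set) \<and> is_ideal J \<and> I \<subset> J}"
proof -
  let ?R = "{(J, I). is_ideal (I::'a set) \<and> is_ideal J \<and> I \<subset> J}"
  have "\<not> (\<exists>f. \<forall>i. (f (Suc i), f i) \<in> ?R)"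
  proof
    assume "\<exists>f. \<forall>i. (f (Suc i), f i) \<in> ?R"
    then obtain f where f: "\<forall>i. (f (Suc i), f i) \<in> ?R" by blast
    have f': "is_ideal (f i) \<and> f i \<subset> f (Suc i)" for i using f[rule_format, of i] by simp
    then have "\<forall>n. is_ideal (f n) \<and> f n \<subseteq> f (Suc n)" by (simp add: psubset_imp_subset)
    moreover have "\<forall>f :: nat \<Rightarrow> 'a set. (\<forall>n. is_ideal (f n) \<and> f n \<subseteq> f (Suc n)) \<longrightarrow>
        (\<exists>N. \<forall>n\<ge>N. f n = f N)" using assms unfolding noetherian_ring_def .
    ultimately obtain N where N: "\<forall>n\<ge>N. f n = f N" by blast
    have "f (Suc N) = f N" by (rule mp[OF spec[OF N, of "Suc N"]]) simp
    with f'[of N] show False by simp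
  qed
  then show ?thesis by (simp add: wf_iff_no_infinite_down_chain)
qed

lemma finite_prime_cover:
  assumes "noetherian_ring TYPE('a::comm_ring_1)"
  shows "is_ideal (I::'a set) \<Longrightarrow> \<exists>F. finite F \<and> (\<forall>P\<in>F. prime_ideal P) \<and>
           (\<forall>Q. prime_ideal Q \<and> I \<subseteq> Q \<longrightarrow> (\<exists>P\<in>F. P \<subseteq> Q))"
proof (induction I rule: wf_induct[OF noeth_wf[OF assms]])
  case (1 I)
  show ?case
  proof (cases "I = UNIV")
    case True
    then show ?thesis by (rule_tac x="{}" in exI) (auto simp: prime_ideal_def)
  next
    case nU: False
    show ?thesis
    proof (cases "prime_ideal I")
      case True then show ?thesis by (rule_tac x="{I}" in exI) auto
    next
      case False
      then obtain a b where ab: "a * b \<in> I" "a \<notin> I" "b \<notin> I"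
        using nU "1.prems" unfolding prime_ideal_def by auto
      define J where "J c = {i + r * c | i r. i \<in> I}" for c
      have Jid: "is_ideal (J c)" for c
        unfolding is_ideal_def J_def
      proof (intro conjI ballI allI)
        show "0 \<in> {i + r * c |i r. i \<in> I}" using ideal_zero[OF "1.prems"]
          by (rule_tac CollectI, rule_tac x=0 in exI, rule_tac x=0 in exI) simp
      next
        fix x y assume "x \<in> {i + r * c |i r. i \<in> I}" "y \<in> {i + r * c |i r. i \<in> I}"
        then obtain i r j s where "x = i + r * c" "y = j + s * c" "i \<in> I" "j \<in> I" by auto
        then show "x + y \<in> {i + r * c |i r. i \<in> I}"
          by (rule_tac CollectI, rule_tac x="i+j" in exI, rule_tac x="r+s" in exI)
             (auto simp: algebra_simps intro: ideal_add[OF "1.prems"])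
      next
        fix t x assume "x \<in> {i + r * c |i r. i \<in> I}"
        then obtain i r where "x = i + r * c" "i \<in> I" by auto
        then show "t * x \<in> {i + r * c |i r. i \<in> I}"
          by (rule_tac CollectI, rule_tac x="t*i" in exI, rule_tac x="t*r" in exI)
             (auto simp: algebra_simps intro: ideal_mult2[OF "1.prems"])
      qed
      have IJ: "I \<subseteq> J c" for c
      proof
        fix x assume "x \<in> I"
        moreover have "x = x + 0 * c" by simp
        ultimately show "x \<in> J c" unfolding J_def by blast
      qed
      have cJ: "c \<in> J c" for c
      proof -
        have "c = 0 + 1 * c" by simp
        then show ?thesis unfolding J_def using ideal_zero[OF "1.prems"] by blast
      qed
      have QJ: "J c \<subseteq> Q" if "is_ideal Q" "I \<subseteq> Q" "c \<in> Q" for c Q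
      proof
        fix x assume "x \<in> J c"
        then obtain i r where "x = i + r * c" "i \<in> I" unfolding J_def by blast
        then show "x \<in> Q" using that ideal_add[of Q i "r * c"] ideal_mult[of Q c r] by blast
      qed
      obtain F1 where F1: "finite F1" "\<forall>P\<in>F1. prime_ideal P"
         "\<forall>Q. prime_ideal Q \<and> J a \<subseteq> Q \<longrightarrow> (\<exists>P\<in>F1. P \<subseteq> Q)"
      proof -
        have "I \<subset> J a" using IJ[of a] cJ[of a] ab(2) by blast
        then have rel: "(J a, I) \<in> {(J, I). is_ideal I \<and> is_ideal J \<and> I \<subset> J}"
          using Jid[of a] "1.prems" by (intro CollectI case_prodI conjI)
        have "\<exists>F. finite F \<and> (\<forall>P\<in>F. prime_ideal P) \<and>
           (\<forall>Q. prime_ideal Q \<and> J a \<subseteq> Q \<longrightarrow> (\<exists>P\<in>F. P \<subseteq> Q))"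
          using mp[OF mp[OF spec[OF "1.IH", of "J a"] rel] Jid[of a]] .
        then show ?thesis by (elim exE conjE) (rule that)
      qed
      obtain F2 where F2: "finite F2" "\<forall>P\<in>F2. prime_ideal P"
         "\<forall>Q. prime_ideal Q \<and> J b \<subseteq> Q \<longrightarrow> (\<exists>P\<in>F2. P \<subseteq> Q)"
      proof -
        have "I \<subset> J b" using IJ[of b] cJ[of b] ab(3) by blast
        then have rel: "(J b, I) \<in> {(J, I). is_ideal I \<and> is_ideal J \<and> I \<subset> J}"
          using Jid[of b] "1.prems" by (intro CollectI case_prodI conjI)
        have "\<exists>F. finite F \<and> (\<forall>P\<in>F. prime_ideal P) \<and>
           (\<forall>Q. prime_ideal Q \<and> J b \<subseteq> Q \<longrightarrow> (\<exists>P\<in>F. P \<subseteq> Q))"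
          using mp[OF mp[OF spec[OF "1.IH", of "J b"] rel] Jid[of b]] .
        then show ?thesis by (elim exE conjE) (rule that)
      qed
      show ?thesis
      proof (rule exI[of _ "F1 \<union> F2"], intro conjI allI impI)
        fix Q assume Q: "prime_ideal Q \<and> I \<subseteq> Q"
        have isQ: "is_ideal Q" "I \<subseteq> Q" using Q prime_is_ideal by auto
        have "a * b \<in> Q" using ab(1) isQ(2) by blast
        then have "a \<in> Q \<or> b \<in> Q" using Q prime_mult by blast
        then show "\<exists>P\<in>F1 \<union> F2. P \<subseteq> Q"
        proof
          assume "a \<in> Q"
          then have "J a \<subseteq> Q" using QJ[OF isQ] by blast
          then obtain P where "P \<in> F1" "P \<subseteq> Q" using F1(3) Q by blast
          then show ?thesis by blast
        next
          assume "b \<in> Q"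
          then have "J b \<subseteq> Q" using QJ[OF isQ] by blast
          then obtain P where "P \<in> F2" "P \<subseteq> Q" using F2(3) Q by blast
          then show ?thesis by blast
        qed
      next
        show "finite (F1 \<union> F2)" using F1(1) F2(1) by simp
      next
        show "\<forall>P\<in>F1 \<union> F2. prime_ideal P" using F1(2) F2(2) by blast
      qed
    qed
  qed
qed

lemma finite_minimal_primes:
  assumes "noetherian_ring TYPE('a::comm_ring_1)"
  shows "finite {P::'a set. minimal_prime P}"
proof -
  have z0: "is_ideal {0::'a}" unfolding is_ideal_def by auto
  obtain F where F: "finite F" "\<forall>P\<in>F. prime_ideal P"
    "\<forall>Q. prime_ideal Q \<and> {0::'a} \<subseteq> Q \<longrightarrow> (\<exists>P\<in>F. P \<subseteq> Q)"
    using finite_prime_cover[OF assms z0] by (elim exE conjE) (rule that)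
  have "{P::'a set. minimal_prime P} \<subseteq> F"
  proof
    fix Q :: "'a set" assume "Q \<in> {P. minimal_prime P}"
    then have Q: "minimal_prime Q" by simp
    then have pQ: "prime_ideal Q" unfolding minimal_prime_def by simp
    then have "0 \<in> Q" using prime_is_ideal ideal_zero by blast
    then have "prime_ideal Q \<and> {0} \<subseteq> Q" using pQ by simp
    then have "\<exists>P\<in>F. P \<subseteq> Q" using F(3) by blast
    then obtain P where P: "P \<in> F" "P \<subseteq> Q" by blast
    then have "prime_ideal P" using F(2) by blast
    moreover have "\<forall>Q'. prime_ideal Q' \<and> Q' \<subseteq> Q \<longrightarrow> Q' = Q" using Q unfolding minimal_prime_def by simp
    ultimately have "P = Q" using P(2) by blast
    then show "Q \<in> F" using P(1) by simp
  qed
  then show ?thesis using F(1) finite_subset by blast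
qed

lemma prime_avoidance:
  fixes b :: "'a::comm_ring_1 set"
  assumes "is_ideal b"
  shows "finite F \<Longrightarrow> \<forall>P\<in>F. prime_ideal P \<Longrightarrow> \<forall>P\<in>F. \<not> b \<subseteq> P \<Longrightarrow> \<exists>a\<in>b. \<forall>P\<in>F. a \<notin> P"
proof (induction "card F" arbitrary: F rule: less_induct)
  case less
  show ?case
  proof (cases "card F \<le> 1")
    case True
    then have "card F = 0 \<or> card F = 1" by linarith
    then have "F = {} \<or> (\<exists>P. F = {P})" using less.prems(1)
      by (metis card_0_eq card_1_singletonE)
    then show ?thesis using less.prems ideal_zero[OF assms] by auto
  next
    case False
    have "\<forall>P\<in>F. \<exists>a\<in>b. \<forall>Q\<in>F - {P}. a \<notin> Q"
    proof
      fix P assume "P \<in> F"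
      then have "card (F - {P}) < card F" using less.prems(1) by (meson card_Diff1_less)
      then show "\<exists>a\<in>b. \<forall>Q\<in>F - {P}. a \<notin> Q" using less by auto
    qed
    then obtain f where f: "\<And>P. P \<in> F \<Longrightarrow> f P \<in> b \<and> (\<forall>Q\<in>F - {P}. f P \<notin> Q)" by metis
    show ?thesis
    proof (cases "\<exists>P\<in>F. f P \<notin> P")
      case True
      then obtain P where "P \<in> F" "f P \<notin> P" by auto
      then show ?thesis using f[of P] by auto
    next
      case fin: False
      obtain P0 where P0: "P0 \<in> F" using False by fastforce
      define a where "a = f P0 + prod f (F - {P0})"
      have "a \<in> b"
      proof -
        have "F - {P0} \<noteq> {}"
        proof
          assume "F - {P0} = {}"
          then have "F = {P0}" using P0 by auto
          then show False using False by simp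
        qed
        then obtain Q where "Q \<in> F - {P0}" by auto
        then have "prod f (F - {P0}) \<in> b"
          using ideal_prod_in[OF assms, of "F - {P0}" Q f] f[of Q] less.prems(1) by auto
        then show ?thesis unfolding a_def using f[OF P0] ideal_add[OF assms] by auto
      qed
      moreover have "a \<notin> Q" if "Q \<in> F" for Q
      proof (cases "Q = P0")
        case True
        have "prod f (F - {P0}) \<notin> Q"
          using prime_prod_notin[of Q "F - {P0}" f] f less.prems that True by auto
        moreover have "f P0 \<in> Q" using fin True that by auto
        ultimately show ?thesis unfolding a_def using less.prems(2) that ideal_diff[of Q]
          unfolding prime_ideal_def by (metis add_diff_cancel_left')
      next
        case False
        have "prod f (F - {P0}) \<in> Q"
          using ideal_prod_in[of Q "F - {P0}" Q f] fin that False less.prems unfolding prime_ideal_def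
          by auto
        moreover have "f P0 \<notin> Q" using f[OF P0] that False by auto
        ultimately show ?thesis unfolding a_def using less.prems(2) that ideal_diff[of Q]
          unfolding prime_ideal_def by (metis add_diff_cancel_right')
      qed
      ultimately show ?thesis by auto
    qed
  qed
qed




definition annR :: "('a::comm_ring_1 \<Rightarrow> 'g::ab_group_add \<Rightarrow> 'g) \<Rightarrow> 'g set \<Rightarrow> 'a set" where
  "annR smult N = {r. \<forall>h\<in>N. smult r h = 0}"

definition single_coeff :: "nat \<Rightarrow> 'a::comm_ring_1 \<Rightarrow> nat \<Rightarrow> 'a" where
  "single_coeff n r = (\<lambda>m. if m = n then r else 0)"

lemma single_coeff_skew: "single_coeff n r \<in> skew_poly"
proof -
  have "{m. single_coeff n r m \<noteq> 0} \<subseteq> {n}" unfolding single_coeff_def by auto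
  then show ?thesis unfolding skew_poly_def using finite_subset by blast
qed

lemma graded_ext_single: "0 \<in> A \<Longrightarrow> r \<in> A \<Longrightarrow> single_coeff n r \<in> graded_ext A"
  unfolding graded_ext_def using single_coeff_skew by (auto simp: single_coeff_def)

lemma graded_ext_zero: "0 \<in> A \<Longrightarrow> (\<lambda>_. 0) \<in> graded_ext A"
  unfolding graded_ext_def skew_poly_def by auto

lemma graded_ext_inj:
  assumes "0 \<in> B" "graded_ext A = graded_ext B"
  shows "A = B"
proof -
  have "(\<lambda>_. 0) \<in> graded_ext A" using graded_ext_zero[OF assms(1)] assms(2) by simp
  then have A0: "0 \<in> A" unfolding graded_ext_def by simp
  show ?thesis
  proof (intro set_eqI iffI)
    fix r assume "r \<in> A"
    then have "single_coeff 0 r \<in> graded_ext B" using graded_ext_single[OF A0] assms(2) by simp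
    then show "r \<in> B" unfolding graded_ext_def by (auto simp: single_coeff_def dest: spec[of _ 0])
  next
    fix r assume "r \<in> B"
    then have "single_coeff 0 r \<in> graded_ext A" using graded_ext_single[OF assms(1)] assms(2) by simp
    then show "r \<in> A" unfolding graded_ext_def by (auto simp: single_coeff_def dest: spec[of _ 0])
  qed
qed

lemma ideal_UNIV: "is_ideal UNIV" unfolding is_ideal_def by simp

lemma ideal_Inter: "\<forall>I\<in>S. is_ideal I \<Longrightarrow> is_ideal (\<Inter>S)"
  unfolding is_ideal_def by blast

lemma prime_Int:
  assumes "prime_ideal P" "is_ideal I" "is_ideal J" "I \<inter> J \<subseteq> P"
  shows "I \<subseteq> P \<or> J \<subseteq> P"
proof (rule ccontr)
  assume "\<not> (I \<subseteq> P \<or> J \<subseteq> P)"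
  then obtain a b where ab: "a \<in> I" "a \<notin> P" "b \<in> J" "b \<notin> P" by blast
  have "a * b \<in> I" using ideal_mult2[OF assms(2) ab(1)] .
  moreover have "a * b \<in> J" using ideal_mult[OF assms(3) ab(3)] .
  ultimately have "a * b \<in> P" using assms(4) by blast
  then show False using prime_mult[OF assms(1)] ab by blast
qed

lemma prime_Inter_finite:
  assumes "prime_ideal P"
  shows "finite S \<Longrightarrow> S \<noteq> {} \<Longrightarrow> \<forall>I\<in>S. is_ideal I \<Longrightarrow> \<Inter>S \<subseteq> P \<Longrightarrow> \<exists>I\<in>S. I \<subseteq> P"
proof (induction S rule: finite_ne_induct)
  case (singleton x) then show ?case by simp
next
  case (insert x F)
  have "x \<inter> \<Inter>F \<subseteq> P" using insert.prems by simp
  then have "x \<subseteq> P \<or> \<Inter>F \<subseteq> P"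
    using prime_Int[OF assms, of x "\<Inter>F"] insert.prems ideal_Inter[of F] by simp
  then show ?case using insert.IH insert.prems by blast
qed

lemma prime_height_ge1:
  assumes "prime_ideal Q" "prime_ideal P" "Q \<subset> P"
  shows "1 \<le> prime_height P"
proof -
  define c where "c = (\<lambda>i::nat. if i = 0 then Q else P)"
  have "(\<forall>i\<le>1. prime_ideal (c i)) \<and> (\<forall>i<1. c i \<subset> c (Suc i)) \<and> c 1 = P"
    unfolding c_def using assms by auto
  then have "enat 1 \<in> {enat n | n. \<exists>c :: nat \<Rightarrow> 'a set.
      (\<forall>i\<le>n. prime_ideal (c i)) \<and> (\<forall>i<n. c i \<subset> c (Suc i)) \<and> c n = P}" by blast
  then have "enat 1 \<le> prime_height P" unfolding prime_height_def by (rule Sup_upper)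
  then show ?thesis by (simp add: one_enat_def)
qed

lemma prime_height_minimal:
  assumes "minimal_prime P"
  shows "prime_height P = 0"
proof -
  have "{enat n | n. \<exists>c :: nat \<Rightarrow> 'a set.
      (\<forall>i\<le>n. prime_ideal (c i)) \<and> (\<forall>i<n. c i \<subset> c (Suc i)) \<and> c n = P} \<subseteq> {0}"
  proof
    fix x assume "x \<in> {enat n | n. \<exists>c :: nat \<Rightarrow> 'a set.
      (\<forall>i\<le>n. prime_ideal (c i)) \<and> (\<forall>i<n. c i \<subset> c (Suc i)) \<and> c n = P}"
    then obtain n c where x: "x = enat n" and c: "\<forall>i\<le>n. prime_ideal (c i)"
      "\<forall>i<n. c i \<subset> c (Suc i)" "c n = P" by blast
    show "x \<in> {0}"
    proof (cases n)
      case 0 then show ?thesis using x by (simp add: zero_enat_def)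
    next
      case (Suc m)
      have "prime_ideal (c m)" using c(1) Suc by simp
      moreover have "c m \<subset> P" using c(2,3) Suc by auto
      moreover have "\<forall>Q. prime_ideal Q \<and> Q \<subseteq> P \<longrightarrow> Q = P" using assms unfolding minimal_prime_def by simp
      ultimately show ?thesis by blast
    qed
  qed
  then have "prime_height P \<le> Sup {0}" unfolding prime_height_def by (rule Sup_subset_mono)
  then show ?thesis by simp
qed

lemma chain_prime_Inter:
  assumes "C \<noteq> {}" "\<forall>Q\<in>C. prime_ideal Q" "chain\<^sub>\<subseteq> C"
  shows "prime_ideal (\<Inter>C)"
  unfolding prime_ideal_def
proof (intro conjI allI impI)
  show "is_ideal (\<Inter>C)" using assms(2) prime_is_ideal ideal_Inter by blast
  obtain Q where "Q \<in> C" using assms(1) by blast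
  then have "1 \<notin> \<Inter>C" using prime_one assms(2) by blast
  then show "\<Inter>C \<noteq> UNIV" by blast
  fix a b assume ab: "a * b \<in> \<Inter>C"
  show "a \<in> \<Inter>C \<or> b \<in> \<Inter>C"
  proof (rule ccontr)
    assume "\<not> (a \<in> \<Inter>C \<or> b \<in> \<Inter>C)"
    then obtain Q1 Q2 where Q: "Q1 \<in> C" "a \<notin> Q1" "Q2 \<in> C" "b \<notin> Q2" by blast
    have "Q1 \<subseteq> Q2 \<or> Q2 \<subseteq> Q1" using assms(3) Q unfolding chain_subset_def by blast
    then show False
    proof
      assume "Q1 \<subseteq> Q2"
      then have "b \<notin> Q1" using Q by blast
      moreover have "a * b \<in> Q1" using ab Q by blast
      ultimately show False using prime_mult[of Q1 a b] assms(2) Q by blast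
    next
      assume "Q2 \<subseteq> Q1"
      then have "a \<notin> Q2" using Q by blast
      moreover have "a * b \<in> Q2" using ab Q by blast
      ultimately show False using prime_mult[of Q2 a b] assms(2) Q by blast
    qed
  qed
qed

lemma exists_minimal_prime_below:
  assumes "prime_ideal (P::'a::comm_ring_1 set)"
  shows "\<exists>Q. minimal_prime Q \<and> Q \<subseteq> P"
proof -
  define A where "A = uminus ` {Q::'a set. prime_ideal Q \<and> Q \<subseteq> P}"
  have "\<forall>C\<in>chains A. \<exists>U\<in>A. \<forall>X\<in>C. X \<subseteq> U"
  proof
    fix C assume C: "C \<in> chains A"
    show "\<exists>U\<in>A. \<forall>X\<in>C. X \<subseteq> U"
    proof (cases "C = {}")
      case True
      have "-P \<in> A" unfolding A_def using assms by blast
      then show ?thesis using True by blast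
    next
      case False
      define D where "D = uminus ` C"
      have CA: "C \<subseteq> A" using C unfolding chains_def by blast
      have Dp: "\<forall>Q\<in>D. prime_ideal Q \<and> Q \<subseteq> P" using CA unfolding D_def A_def by auto
      have "chain\<^sub>\<subseteq> C" using C unfolding chains_def by blast
      then have "chain\<^sub>\<subseteq> D" unfolding D_def chain_subset_def by blast
      then have "prime_ideal (\<Inter>D)" using chain_prime_Inter[of D] Dp False unfolding D_def by blast
      moreover have "\<Inter>D \<subseteq> P" using Dp False unfolding D_def by blast
      ultimately have "- \<Inter>D \<in> A" unfolding A_def by blast
      moreover have "\<forall>X\<in>C. X \<subseteq> - \<Inter>D" unfolding D_def by blast
      ultimately show ?thesis by blast
    qed
  qed
  then obtain M where M: "M \<in> A" "\<forall>X\<in>A. M \<subseteq> X \<longrightarrow> X = M" by (rule bexE[OF Zorn_Lemma2])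
  obtain Q where Q: "M = -Q" "prime_ideal Q" "Q \<subseteq> P" using M(1) unfolding A_def by blast
  have "minimal_prime Q" unfolding minimal_prime_def
  proof (intro conjI allI impI)
    show "prime_ideal Q" by fact
    fix Q' assume Q': "prime_ideal Q' \<and> Q' \<subseteq> Q"
    then have "-Q' \<in> A" unfolding A_def using Q by blast
    moreover have "M \<subseteq> -Q'" using Q' Q by blast
    ultimately have "-Q' = M" using M(2) by blast
    then show "Q' = Q" using Q by simp
  qed
  then show ?thesis using Q by blast
qed




context
  fixes smult :: "'a::comm_ring_1 \<Rightarrow> 'g::ab_group_add \<Rightarrow> 'g" and X :: "'g \<Rightarrow> 'g" and p :: nat
  assumes fm: "frob_module p smult X" and tf: "x_torsion_free X" and p0: "0 < p"
begin

lemma md: "module smult" using fm unfolding frob_module_def by simp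
lemma X_add: "X (g + h) = X g + X h" using fm unfolding frob_module_def by simp
lemma X_smult: "X (smult r g) = smult (r ^ p) (X g)" using fm unfolding frob_module_def by simp

lemma sm0: "smult r 0 = 0" using module.scale_zero_right[OF md] .
lemma sm0l: "smult 0 g = 0" using module.scale_zero_left[OF md] .
lemma smsm: "smult a (smult b g) = smult (a * b) g" using module.scale_scale[OF md] .
lemma smadd: "smult a (g + h) = smult a g + smult a h" using module.scale_right_distrib[OF md] .

lemma X0: "X 0 = 0"
proof -
  have "X 0 = X 0 + X 0" using X_add[of 0 0] by simp
  then show ?thesis by simp
qed

lemma Xn0: "(X ^^ n) 0 = 0"
  by (induction n) (simp_all add: X0)

lemma Xn_add: "(X ^^ n) (g + h) = (X ^^ n) g + (X ^^ n) h"
  by (induction n) (simp_all add: X_add)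

lemma Xn_smult: "(X ^^ n) (smult r g) = smult (r ^ (p ^ n)) ((X ^^ n) g)"
proof (induction n)
  case 0 then show ?case by simp
next
  case (Suc n)
  have "(X ^^ Suc n) (smult r g) = X (smult (r ^ (p ^ n)) ((X ^^ n) g))" using Suc by simp
  also have "\<dots> = smult ((r ^ (p ^ n)) ^ p) ((X ^^ Suc n) g)" using X_smult by simp
  also have "(r ^ (p ^ n)) ^ p = r ^ (p ^ Suc n)" by (simp add: power_mult[symmetric] mult.commute)
  finally show ?case .
qed

lemma Xn_tf: "(X ^^ n) y = 0 \<Longrightarrow> y = 0"
proof (induction n arbitrary: y)
  case 0 then show ?case by simp
next
  case (Suc n)
  have "(X ^^ Suc n) y = (X ^^ n) (X y)" by (simp only: funpow_Suc_right comp_def)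
  then have "(X ^^ n) (X y) = 0" using Suc.prems by simp
  then have "X y = 0" using Suc.IH by blast
  then show ?case using tf unfolding x_torsion_free_def by blast
qed

lemma key: "smult r ((X ^^ n) h) = 0 \<Longrightarrow> smult r h = 0"
proof -
  assume a: "smult r ((X ^^ n) h) = 0"
  have pn: "p ^ n = Suc (p ^ n - 1)" using p0 by simp
  have "(X ^^ n) (smult r h) = smult (r ^ (p ^ n)) ((X ^^ n) h)" by (rule Xn_smult)
  also have "\<dots> = smult (r ^ (p ^ n - 1)) (smult r ((X ^^ n) h))"
    by (subst pn, simp add: smsm mult.commute)
  also have "\<dots> = 0" using a sm0 by simp
  finally show ?thesis by (rule Xn_tf)
qed

lemma sub_Xn: "frob_submodule smult X N \<Longrightarrow> h \<in> N \<Longrightarrow> (X ^^ n) h \<in> N"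
  by (induction n) (auto simp: frob_submodule_def)

lemma grann_eq:
  assumes "frob_submodule smult X N"
  shows "grann smult X N = graded_ext (annR smult N)"
proof -
  have "(\<forall>h\<in>N. smult r ((X ^^ n) h) = 0) \<longleftrightarrow> (\<forall>h\<in>N. smult r h = 0)" for r n
    using key sub_Xn[OF assms] by blast
  then show ?thesis unfolding grann_def graded_ext_def annR_def by auto
qed

lemma annR_zero: "0 \<in> annR smult N" unfolding annR_def using sm0l by simp

lemma annR_ideal: "is_ideal (annR smult N)"
  unfolding is_ideal_def
proof (intro conjI ballI allI)
  show "0 \<in> annR smult N" by (rule annR_zero)
next
  fix a b assume "a \<in> annR smult N" "b \<in> annR smult N"
  then show "a + b \<in> annR smult N" unfolding annR_def using module.scale_left_distrib[OF md] by simp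
next
  fix r a assume a: "a \<in> annR smult N"
  have "smult (r * a) h = 0" if "h \<in> N" for h
  proof -
    have "smult (r * a) h = smult r (smult a h)" using smsm by simp
    then show ?thesis using a that sm0 unfolding annR_def by simp
  qed
  then show "r * a \<in> annR smult N" unfolding annR_def by simp
qed

lemma special_iff:
  "b \<in> special_ideals smult X \<longleftrightarrow> (\<exists>N. frob_submodule smult X N \<and> b = annR smult N)"
proof
  assume "b \<in> special_ideals smult X"
  then obtain N where N: "frob_submodule smult X N" "grann smult X N = graded_ext b"
    unfolding special_ideals_def by blast
  then have "graded_ext b = graded_ext (annR smult N)" using grann_eq by simp
  then have "b = annR smult N" using graded_ext_inj annR_zero by blast
  then show "\<exists>N. frob_submodule smult X N \<and> b = annR smult N" using N by blast
next
  assume "\<exists>N. frob_submodule smult X N \<and> b = annR smult N"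
  then obtain N where "frob_submodule smult X N" "b = annR smult N" by blast
  then show "b \<in> special_ideals smult X" unfolding special_ideals_def using grann_eq by blast
qed

lemma special_ideal: "b \<in> special_ideals smult X \<Longrightarrow> is_ideal b"
proof -
  assume "b \<in> special_ideals smult X"
  then have "\<exists>N. frob_submodule smult X N \<and> b = annR smult N" by (rule special_iff[THEN iffD1])
  then obtain N where "b = annR smult N" by (elim exE conjE)
  then show ?thesis using annR_ideal by simp
qed

lemma special_UNIV: "UNIV \<in> special_ideals smult X"
proof -
  have "frob_submodule smult X {0}" unfolding frob_submodule_def using sm0 X0 by simp
  moreover have "annR smult {0} = UNIV" unfolding annR_def using sm0 by simp
  ultimately have "\<exists>N. frob_submodule smult X N \<and> UNIV = annR smult N" by metis
  then show ?thesis by (rule special_iff[THEN iffD2])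
qed

lemma special_Int:
  assumes "b1 \<in> special_ideals smult X" "b2 \<in> special_ideals smult X"
  shows "b1 \<inter> b2 \<in> special_ideals smult X"
proof -
  obtain N1 where N1: "frob_submodule smult X N1" "b1 = annR smult N1"
    using assms(1)[THEN special_iff[THEN iffD1]] by (elim exE conjE)
  obtain N2 where N2: "frob_submodule smult X N2" "b2 = annR smult N2"
    using assms(2)[THEN special_iff[THEN iffD1]] by (elim exE conjE)
  define N where "N = {a + b | a b. a \<in> N1 \<and> b \<in> N2}"
  have s1: "0 \<in> N1" "\<And>g h. g \<in> N1 \<Longrightarrow> h \<in> N1 \<Longrightarrow> g + h \<in> N1"
     "\<And>r g. g \<in> N1 \<Longrightarrow> smult r g \<in> N1" "\<And>g. g \<in> N1 \<Longrightarrow> X g \<in> N1"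
    using N1(1) unfolding frob_submodule_def by simp_all
  have s2: "0 \<in> N2" "\<And>g h. g \<in> N2 \<Longrightarrow> h \<in> N2 \<Longrightarrow> g + h \<in> N2"
     "\<And>r g. g \<in> N2 \<Longrightarrow> smult r g \<in> N2" "\<And>g. g \<in> N2 \<Longrightarrow> X g \<in> N2"
    using N2(1) unfolding frob_submodule_def by simp_all
  have Nin: "a + b \<in> N" if "a \<in> N1" "b \<in> N2" for a b unfolding N_def using that by blast
  have "frob_submodule smult X N" unfolding frob_submodule_def
  proof (intro conjI ballI allI)
    show "0 \<in> N" using Nin[OF s1(1) s2(1)] by simp
  next
    fix g h assume "g \<in> N" "h \<in> N"
    then obtain a b c d where abcd: "g = a + b" "h = c + d" "a \<in> N1" "b \<in> N2" "c \<in> N1" "d \<in> N2"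
      unfolding N_def by blast
    have "g + h = (a + c) + (b + d)" unfolding abcd by (simp add: algebra_simps)
    then show "g + h \<in> N" using Nin[OF s1(2)[OF abcd(3,5)] s2(2)[OF abcd(4,6)]] by simp
  next
    fix r g assume "g \<in> N"
    then obtain a b where ab: "g = a + b" "a \<in> N1" "b \<in> N2" unfolding N_def by blast
    have "smult r g = smult r a + smult r b" unfolding ab by (rule smadd)
    then show "smult r g \<in> N" using Nin[OF s1(3)[OF ab(2)] s2(3)[OF ab(3)]] by simp
  next
    fix g assume "g \<in> N"
    then obtain a b where ab: "g = a + b" "a \<in> N1" "b \<in> N2" unfolding N_def by blast
    have "X g = X a + X b" unfolding ab by (rule X_add)
    then show "X g \<in> N" using Nin[OF s1(4)[OF ab(2)] s2(4)[OF ab(3)]] by simp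
  qed
  moreover have "annR smult N = b1 \<inter> b2"
  proof (intro set_eqI iffI)
    fix r assume r: "r \<in> annR smult N"
    have "a \<in> N1 \<Longrightarrow> smult r a = 0" for a
    proof -
      assume "a \<in> N1"
      then have "a + 0 \<in> N" using Nin s2(1) by blast
      then show ?thesis using r unfolding annR_def by simp
    qed
    moreover have "b \<in> N2 \<Longrightarrow> smult r b = 0" for b
    proof -
      assume "b \<in> N2"
      then have "0 + b \<in> N" using Nin s1(1) by blast
      then show ?thesis using r unfolding annR_def by simp
    qed
    ultimately show "r \<in> b1 \<inter> b2" unfolding N1(2) N2(2) annR_def by blast
  next
    fix r assume "r \<in> b1 \<inter> b2"
    then have r: "\<forall>h\<in>N1. smult r h = 0" "\<forall>h\<in>N2. smult r h = 0" unfolding N1(2) N2(2) annR_def by auto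
    have "smult r g = 0" if "g \<in> N" for g
    proof -
      obtain a b where ab: "g = a + b" "a \<in> N1" "b \<in> N2" using \<open>g \<in> N\<close> unfolding N_def by blast
      have "smult r g = smult r a + smult r b" unfolding ab by (rule smadd)
      then show ?thesis using r ab by simp
    qed
    then show "r \<in> annR smult N" unfolding annR_def by simp
  qed
  ultimately have "\<exists>N. frob_submodule smult X N \<and> b1 \<inter> b2 = annR smult N" by metis
  then show ?thesis by (rule special_iff[THEN iffD2])
qed

lemma special_Inter: "finite S \<Longrightarrow> S \<subseteq> special_ideals smult X \<Longrightarrow> \<Inter>S \<in> special_ideals smult X"
proof (induction S rule: finite_induct)
  case empty then show ?case using special_UNIV by simp
next
  case (insert x F) then show ?case using special_Int by simp
qed

end




lemma ideal_height_UNIV: "1 \<le> ideal_height (UNIV :: 'a::comm_ring_1 set)"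
proof -
  have eq: "{prime_height P | P. prime_ideal P \<and> (UNIV::'a set) \<subseteq> P} = {}"
    unfolding prime_ideal_def by auto
  have "ideal_height (UNIV :: 'a set) = top" unfolding ideal_height_def eq by simp
  then show ?thesis by simp
qed

lemma height_ge1_not_minimal:
  assumes "1 \<le> ideal_height b" "minimal_prime P"
  shows "\<not> b \<subseteq> P"
proof
  assume "b \<subseteq> P"
  then have "prime_height P \<in> {prime_height P | P. prime_ideal P \<and> b \<subseteq> P}"
    using assms(2) unfolding minimal_prime_def by blast
  then have "ideal_height b \<le> prime_height P" unfolding ideal_height_def by (rule Inf_lower)
  then have "ideal_height b \<le> 0" using prime_height_minimal[OF assms(2)] by simp
  then show False using assms(1) by simp
qed

lemma height_ge1_of_Rcirc:
  assumes "c \<in> R_circ" "c \<in> b"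
  shows "1 \<le> ideal_height b"
  unfolding ideal_height_def
proof (rule Inf_greatest)
  fix x assume "x \<in> {prime_height P | P. prime_ideal P \<and> b \<subseteq> P}"
  then obtain P where P: "x = prime_height P" "prime_ideal P" "b \<subseteq> P" by blast
  obtain Q where Q: "minimal_prime Q" "Q \<subseteq> P" using exists_minimal_prime_below[OF P(2)] by blast
  have "c \<notin> Q" using assms(1) Q(1) unfolding R_circ_def by blast
  moreover have "c \<in> P" using assms(2) P(3) by blast
  ultimately have "Q \<subset> P" using Q(2) by blast
  moreover have "prime_ideal Q" using Q(1) unfolding minimal_prime_def by simp
  ultimately show "1 \<le> x" using prime_height_ge1 P by blast
qed

lemma height_Inter:
  assumes "finite S" "S \<noteq> {}" "\<forall>I\<in>S. is_ideal I" "\<forall>I\<in>S. 1 \<le> ideal_height I"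
  shows "1 \<le> ideal_height (\<Inter>S)"
  unfolding ideal_height_def
proof (rule Inf_greatest)
  fix x assume "x \<in> {prime_height P | P. prime_ideal P \<and> \<Inter>S \<subseteq> P}"
  then obtain P where P: "x = prime_height P" "prime_ideal P" "\<Inter>S \<subseteq> P" by blast
  obtain I where I: "I \<in> S" "I \<subseteq> P" using prime_Inter_finite[OF P(2) assms(1,2,3) P(3)] by blast
  have "prime_height P \<in> {prime_height P | P. prime_ideal P \<and> I \<subseteq> P}" using P(2) I(2) by blast
  then have "ideal_height I \<le> prime_height P" unfolding ideal_height_def by (rule Inf_lower)
  then show "1 \<le> x" using assms(4) I(1) P(1) order_trans by blast
qed

theorem theorem3p12:
  fixes smult :: "'a::comm_ring_1 \<Rightarrow> 'g::ab_group_add \<Rightarrow> 'g"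
    and X :: "'g \<Rightarrow> 'g" and p :: nat
  assumes "noetherian_ring TYPE('a)"
    and "prime p" and "CHAR('a) = p"
    and "frob_module p smult X"
    and "x_torsion_free X"
    and "finite (special_ideals smult X)"
  shows "(\<exists>!b. b \<in> special_ideals smult X \<and> ideal_height b \<ge> 1 \<and>
            (\<forall>c\<in>special_ideals smult X. ideal_height c \<ge> 1 \<longrightarrow> b \<subseteq> c))
       \<and> (\<forall>b. b \<in> special_ideals smult X \<and> ideal_height b \<ge> 1 \<and>
            (\<forall>c\<in>special_ideals smult X. ideal_height c \<ge> 1 \<longrightarrow> b \<subseteq> c) \<longrightarrow>
          (\<forall>g. ((\<forall>c\<in>graded_ext b. skew_act smult X c g = 0) \<longleftrightarrow>
                  (\<exists>c\<in>R_circ \<inter> b. \<exists>N. \<forall>n\<ge>N. smult c ((X ^^ n) g) = 0))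
             \<and> ((\<exists>c\<in>R_circ \<inter> b. \<exists>N. \<forall>n\<ge>N. smult c ((X ^^ n) g) = 0) \<longleftrightarrow>
                  (\<exists>c\<in>R_circ. \<exists>N. \<forall>n\<ge>N. smult c ((X ^^ n) g) = 0))))"
proof -
  note fm = assms(4) and tf = assms(5)
  have p0: "0 < p" using assms(2) prime_gt_0_nat by blast
  let ?SP = "special_ideals smult X"
  define S where "S = {c \<in> ?SP. 1 \<le> ideal_height c}"
  have Sfin: "finite S" unfolding S_def using assms(6) by simp
  have US: "UNIV \<in> S" unfolding S_def using special_UNIV[OF fm tf p0] ideal_height_UNIV by simp
  have SSP: "S \<subseteq> ?SP" unfolding S_def by blast
  define b0 where "b0 = \<Inter>S"
  have b0sp: "b0 \<in> ?SP" unfolding b0_def using special_Inter[OF fm tf p0 Sfin SSP] .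
  have b0h: "1 \<le> ideal_height b0" unfolding b0_def
  proof (rule height_Inter[OF Sfin])
    show "S \<noteq> {}" using US by blast
    show "\<forall>I\<in>S. is_ideal I" using SSP special_ideal[OF fm tf p0] by blast
    show "\<forall>I\<in>S. 1 \<le> ideal_height I" unfolding S_def by blast
  qed
  have b0min: "\<forall>c\<in>?SP. 1 \<le> ideal_height c \<longrightarrow> b0 \<subseteq> c" unfolding b0_def S_def by blast
  have part1: "\<exists>!b. b \<in> ?SP \<and> ideal_height b \<ge> 1 \<and> (\<forall>c\<in>?SP. ideal_height c \<ge> 1 \<longrightarrow> b \<subseteq> c)"
  proof (rule ex1I[of _ b0])
    show "b0 \<in> ?SP \<and> ideal_height b0 \<ge> 1 \<and> (\<forall>c\<in>?SP. ideal_height c \<ge> 1 \<longrightarrow> b0 \<subseteq> c)"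
      using b0sp b0h b0min by blast
  next
    fix b assume b: "b \<in> ?SP \<and> ideal_height b \<ge> 1 \<and> (\<forall>c\<in>?SP. ideal_height c \<ge> 1 \<longrightarrow> b \<subseteq> c)"
    then have "b \<subseteq> b0" using b0sp b0h by blast
    moreover have "b0 \<subseteq> b" using b b0min by blast
    ultimately show "b = b0" by blast
  qed
  have part2: "((\<forall>c\<in>graded_ext b. skew_act smult X c g = 0) \<longleftrightarrow>
                  (\<exists>c\<in>R_circ \<inter> b. \<exists>N. \<forall>n\<ge>N. smult c ((X ^^ n) g) = 0))
             \<and> ((\<exists>c\<in>R_circ \<inter> b. \<exists>N. \<forall>n\<ge>N. smult c ((X ^^ n) g) = 0) \<longleftrightarrow>
                  (\<exists>c\<in>R_circ. \<exists>N. \<forall>n\<ge>N. smult c ((X ^^ n) g) = 0))"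
    if b: "b \<in> ?SP" "ideal_height b \<ge> 1" "\<forall>c\<in>?SP. ideal_height c \<ge> 1 \<longrightarrow> b \<subseteq> c" for b g
  proof -
    have bid: "is_ideal b" using special_ideal[OF fm tf p0 b(1)] .
    have b0: "0 \<in> b" using ideal_zero[OF bid] .
    let ?A = "\<forall>c\<in>graded_ext b. skew_act smult X c g = 0"
    let ?B = "\<exists>c\<in>R_circ \<inter> b. \<exists>N. \<forall>n\<ge>N. smult c ((X ^^ n) g) = 0"
    let ?C = "\<exists>c\<in>R_circ. \<exists>N. \<forall>n\<ge>N. smult c ((X ^^ n) g) = 0"
    have AB: ?B if A: ?A
    proof -
      have ann: "smult r ((X ^^ n) g) = 0" if "r \<in> b" for r n
      proof (cases "r = 0")
        case True then show ?thesis using sm0l[OF fm tf p0] by simp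
      next
        case False
        have "single_coeff n r \<in> graded_ext b" using graded_ext_single[OF b0 that] .
        then have "skew_act smult X (single_coeff n r) g = 0" using A by blast
        moreover have "{m. single_coeff n r m \<noteq> 0} = {n}" using False unfolding single_coeff_def by auto
        ultimately show ?thesis unfolding skew_act_def by (simp add: single_coeff_def)
      qed
      have "finite {P::'a set. minimal_prime P}" using finite_minimal_primes[OF assms(1)] .
      moreover have "\<forall>P\<in>{P::'a set. minimal_prime P}. prime_ideal P" unfolding minimal_prime_def by blast
      moreover have "\<forall>P\<in>{P::'a set. minimal_prime P}. \<not> b \<subseteq> P" using height_ge1_not_minimal b(2) by blast
      ultimately obtain c where c: "c \<in> b" "\<forall>P\<in>{P::'a set. minimal_prime P}. c \<notin> P"
        using prime_avoidance[OF bid] by blast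
      have "c \<in> R_circ" unfolding R_circ_def using c(2) by blast
      then show ?B using c(1) ann by blast
    qed
    have BC: ?C if ?B using that by blast
    have CA: ?A if C: ?C
    proof -
      obtain c N where c: "c \<in> R_circ" "\<forall>n\<ge>N. smult c ((X ^^ n) g) = 0" using C by blast
      define L where "L = {h. \<forall>k. smult c ((X ^^ k) h) = 0}"
      have Lsub: "frob_submodule smult X L" unfolding frob_submodule_def
      proof (intro conjI ballI allI)
        show "0 \<in> L" unfolding L_def using Xn0[OF fm tf p0] sm0[OF fm tf p0] by simp
      next
        fix h1 h2 assume "h1 \<in> L" "h2 \<in> L"
        then show "h1 + h2 \<in> L" unfolding L_def using Xn_add[OF fm tf p0] smadd[OF fm tf p0] by simp
      next
        fix r h assume h: "h \<in> L"
        have "smult c ((X ^^ k) (smult r h)) = 0" for k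
        proof -
          have "smult c ((X ^^ k) (smult r h)) = smult c (smult (r ^ (p ^ k)) ((X ^^ k) h))"
            using Xn_smult[OF fm tf p0] by simp
          also have "\<dots> = smult (r ^ (p ^ k)) (smult c ((X ^^ k) h))"
            using smsm[OF fm tf p0] by (simp add: mult.commute)
          also have "\<dots> = 0" using h sm0[OF fm tf p0] unfolding L_def by simp
          finally show ?thesis .
        qed
        then show "smult r h \<in> L" unfolding L_def by simp
      next
        fix h assume h: "h \<in> L"
        have "smult c ((X ^^ k) (X h)) = 0" for k
        proof -
          have "(X ^^ k) (X h) = (X ^^ Suc k) h" by (simp only: funpow_Suc_right comp_def)
          moreover have "smult c ((X ^^ Suc k) h) = 0"
            using h unfolding L_def mem_Collect_eq by (rule spec)
          ultimately show ?thesis by (simp only:)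
        qed
        then show "X h \<in> L" unfolding L_def by blast
      qed
      have cL: "c \<in> annR smult L" unfolding annR_def L_def
      proof (intro CollectI ballI)
        fix h assume "h \<in> {h. \<forall>k. smult c ((X ^^ k) h) = 0}"
        then have "smult c ((X ^^ 0) h) = 0" by blast
        then show "smult c h = 0" by simp
      qed
      have "\<exists>N. frob_submodule smult X N \<and> annR smult L = annR smult N" using Lsub by blast
      then have Lsp: "annR smult L \<in> ?SP" by (rule special_iff[OF fm tf p0, THEN iffD2])
      have "1 \<le> ideal_height (annR smult L)" using height_ge1_of_Rcirc[OF c(1) cL] .
      then have bL: "b \<subseteq> annR smult L" using b(3)[rule_format, OF Lsp] by simp
      have ann: "smult r ((X ^^ n) g) = 0" if r: "r \<in> b" for r n
      proof -
        have "(X ^^ (n + N)) g \<in> L" unfolding L_def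
        proof (intro CollectI allI)
          fix k
          have "(X ^^ k) ((X ^^ (n + N)) g) = (X ^^ (k + (n + N))) g" by (simp only: funpow_add comp_apply)
          moreover have "smult c ((X ^^ (k + (n + N))) g) = 0" using c(2) by simp
          ultimately show "smult c ((X ^^ k) ((X ^^ (n + N)) g)) = 0" by (simp only:)
        qed
        moreover have "r \<in> annR smult L" using bL r by blast
        ultimately have "smult r ((X ^^ (n + N)) g) = 0" unfolding annR_def by blast
        moreover have "(X ^^ (n + N)) g = (X ^^ N) ((X ^^ n) g)"
          by (simp only: add.commute[of n N] funpow_add comp_apply)
        ultimately have "smult r ((X ^^ N) ((X ^^ n) g)) = 0" by (simp only:)
        then show ?thesis by (rule key[OF fm tf p0])
      qed
      show ?A
      proof
        fix c' assume "c' \<in> graded_ext b"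
        then have "\<forall>m. c' m \<in> b" unfolding graded_ext_def by blast
        then show "skew_act smult X c' g = 0" unfolding skew_act_def using ann by simp
      qed
    qed
    show ?thesis
    proof (intro conjI iffI)
      assume ?A then show ?B by (rule AB)
    next
      assume ?B then show ?A by (rule CA[OF BC])
    next
      assume ?B then show ?C by (rule BC)
    next
      assume ?C then show ?B by (rule AB[OF CA])
    qed
  qed
  show ?thesis
  proof (rule conjI)
    show "\<exists>!b. b \<in> ?SP \<and> ideal_height b \<ge> 1 \<and> (\<forall>c\<in>?SP. ideal_height c \<ge> 1 \<longrightarrow> b \<subseteq> c)"
      by (rule part1)
  next
    show "\<forall>b. b \<in> special_ideals smult X \<and> ideal_height b \<ge> 1 \<and>
            (\<forall>c\<in>special_ideals smult X. ideal_height c \<ge> 1 \<longrightarrow> b \<subseteq> c) \<longrightarrow>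
          (\<forall>g. ((\<forall>c\<in>graded_ext b. skew_act smult X c g = 0) \<longleftrightarrow>
                  (\<exists>c\<in>R_circ \<inter> b. \<exists>N. \<forall>n\<ge>N. smult c ((X ^^ n) g) = 0))
             \<and> ((\<exists>c\<in>R_circ \<inter> b. \<exists>N. \<forall>n\<ge>N. smult c ((X ^^ n) g) = 0) \<longleftrightarrow>
                  (\<exists>c\<in>R_circ. \<exists>N. \<forall>n\<ge>N. smult c ((X ^^ n) g) = 0)))"
    proof (intro allI impI)
      fix b g
      assume H: "b \<in> special_ideals smult X \<and> ideal_height b \<ge> 1 \<and>
            (\<forall>c\<in>special_ideals smult X. ideal_height c \<ge> 1 \<longrightarrow> b \<subseteq> c)"
      from H have h1: "b \<in> ?SP" by (rule conjunct1)
      from H have h2: "ideal_height b \<ge> 1" by (rule conjunct1[OF conjunct2])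
      from H have h3: "\<forall>c\<in>?SP. ideal_height c \<ge> 1 \<longrightarrow> b \<subseteq> c" by (rule conjunct2[OF conjunct2])
      show "((\<forall>c\<in>graded_ext b. skew_act smult X c g = 0) \<longleftrightarrow>
                  (\<exists>c\<in>R_circ \<inter> b. \<exists>N. \<forall>n\<ge>N. smult c ((X ^^ n) g) = 0))
             \<and> ((\<exists>c\<in>R_circ \<inter> b. \<exists>N. \<forall>n\<ge>N. smult c ((X ^^ n) g) = 0) \<longleftrightarrow>
                  (\<exists>c\<in>R_circ. \<exists>N. \<forall>n\<ge>N. smult c ((X ^^ n) g) = 0))"
        by (rule part2[OF h1 h2 h3])
    qed
  qed
qed


end
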